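(* The pair of graded graphs $(\mathbf{Comp}_\bullet,\mathbf{U},\mathbf{V})$ is $2$-dual, that is $\mathbf{V}^\star\mathbf{U}-\mathbf{U}\mathbf{V}^\star=2I$, where $I$ is the identity map.
   Context: $\mathbb{K}$ is a field of characteristic zero. $\mathbf{Comp}$ is the set of all nonempty words over $\{0,1\}$ beginning with $0$ (the elements of the operad of integer compositions), graded by rank $|u|-1$; $\mathbf{Comp}_\bullet$ denotes this graded set. The prefix graph and twisted prefix graph of this operad are given by the linear maps on $\mathbb{K}\langle\mathbf{Comp}\rangle$ (basis: these words) $$\mathbf{U}(u)=\sum_{i\in[|u|]}\big(u_1\cdots u_i\,0\,u_{i+1}\cdots u_{|u|}+u_1\cdots u_i\,1\,u_{i+1}\cdots u_{|u|}\big),\qquad \mathbf{V}(u)=u0+u1.$$ $\mathbf{V}^\star$ is the adjoint of $\mathbf{V}$ for the scalar product making the words orthonormal. *)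

theory Defs
  imports Main
begin

text \<open>Words over {0,1} are bool lists, with False = 0 and True = 1.
  Elements of K<Comp> are finitely supported functions from words to K supported on Comp.\<close>

definition Comp :: "bool list set" where
  "Comp = {u. u \<noteq> [] \<and> hd u = False}"

definition bvec :: "bool list \<Rightarrow> bool list \<Rightarrow> 'a::field" where
  "bvec u = (\<lambda>w. if w = u then 1 else 0)"

definition supp_v :: "(bool list \<Rightarrow> 'a::field) \<Rightarrow> bool list set" where
  "supp_v x = {w. x w \<noteq> 0}"

definition in_KComp :: "(bool list \<Rightarrow> 'a::field) \<Rightarrow> bool" where
  "in_KComp x \<longleftrightarrow> finite (supp_v x) \<and> supp_v x \<subseteq> Comp"

definition lin_ext :: "(bool list \<Rightarrow> bool list \<Rightarrow> 'a::field) \<Rightarrow> (bool list \<Rightarrow> 'a) \<Rightarrow> bool list \<Rightarrow> 'a" where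
  "lin_ext f x = (\<lambda>w. \<Sum>u\<in>supp_v x. x u * f u w)"

definition scal :: "(bool list \<Rightarrow> 'a::field) \<Rightarrow> (bool list \<Rightarrow> 'a) \<Rightarrow> 'a" where
  "scal x y = (\<Sum>w\<in>supp_v x \<inter> supp_v y. x w * y w)"

definition ins :: "bool list \<Rightarrow> nat \<Rightarrow> bool \<Rightarrow> bool list" where
  "ins u i b = take i u @ b # drop i u"

definition U_basis :: "bool list \<Rightarrow> bool list \<Rightarrow> 'a::field" where
  "U_basis u = (\<lambda>w. \<Sum>i\<in>{1..length u}. bvec (ins u i False) w + bvec (ins u i True) w)"

definition V_basis :: "bool list \<Rightarrow> bool list \<Rightarrow> 'a::field" where
  "V_basis u = (\<lambda>w. bvec (u @ [False]) w + bvec (u @ [True]) w)"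

definition Vstar_basis :: "bool list \<Rightarrow> bool list \<Rightarrow> 'a::field" where
  "Vstar_basis u = (\<lambda>w. if w \<in> Comp then scal (bvec u) (V_basis w) else 0)"

definition U_op :: "(bool list \<Rightarrow> 'a::field) \<Rightarrow> bool list \<Rightarrow> 'a" where
  "U_op = lin_ext U_basis"

definition V_op :: "(bool list \<Rightarrow> 'a::field) \<Rightarrow> bool list \<Rightarrow> 'a" where
  "V_op = lin_ext V_basis"

definition Vstar_op :: "(bool list \<Rightarrow> 'a::field) \<Rightarrow> bool list \<Rightarrow> 'a" where
  "Vstar_op = lin_ext Vstar_basis"

end

theory Submission
  imports Defs
begin

lemma lin_ext_S:
  assumes "finite S" "supp_v x \<subseteq> S"
  shows "lin_ext g x w = (\<Sum>u\<in>S. x u * g u w)"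
  unfolding lin_ext_def
  by (rule sum.mono_neutral_left) (use assms in \<open>auto simp: supp_v_def\<close>)

lemma sum_bvec:
  assumes "finite S" "a \<in> S"
  shows "(\<Sum>v\<in>S. bvec a v * (h v::'a::field)) = h a"
proof -
  have "(\<Sum>v\<in>S. bvec a v * h v) = (\<Sum>v\<in>S. if v = a then h a else 0)"
    by (rule sum.cong) (auto simp: bvec_def)
  then show ?thesis using assms by simp
qed

lemma supp_bvec: "supp_v (bvec u :: _ \<Rightarrow> 'a::field) = {u}"
  by (auto simp: supp_v_def bvec_def)

lemma lin_ext_bvec: "lin_ext g (bvec v) w = g v w"
  unfolding lin_ext_def supp_bvec by (simp add: bvec_def)

lemma lin_ext_zero: "lin_ext g (\<lambda>_. 0) w = 0"
  by (simp add: lin_ext_def supp_v_def)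

definition insS :: "bool list \<Rightarrow> bool list set" where
  "insS u = (\<lambda>i. ins u i False) ` {1..length u} \<union> (\<lambda>i. ins u i True) ` {1..length u}"

lemma finite_insS: "finite (insS u)" by (simp add: insS_def)

lemma supp_U: "supp_v (U_basis u :: _ \<Rightarrow> 'a::field) \<subseteq> insS u"
proof
  fix w assume "w \<in> supp_v (U_basis u :: _ \<Rightarrow> 'a)"
  then have "(\<Sum>i\<in>{1..length u}. bvec (ins u i False) w + bvec (ins u i True) w :: 'a) \<noteq> 0"
    by (simp add: supp_v_def U_basis_def)
  then obtain i where "i \<in> {1..length u}" "(bvec (ins u i False) w + bvec (ins u i True) w :: 'a) \<noteq> 0"
    by (meson sum.neutral)
  then show "w \<in> insS u" by (auto simp: insS_def bvec_def split: if_splits)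
qed

lemma lin_ext_U:
  "lin_ext g (U_basis u) w = (\<Sum>i\<in>{1..length u}. g (ins u i False) w + g (ins u i True) w)"
proof -
  have "lin_ext g (U_basis u) w = (\<Sum>v\<in>insS u. U_basis u v * g v w)"
    by (rule lin_ext_S[OF finite_insS supp_U])
  also have "\<dots> = (\<Sum>v\<in>insS u. \<Sum>i\<in>{1..length u}. bvec (ins u i False) v * g v w + bvec (ins u i True) v * g v w)"
    by (simp add: U_basis_def sum_distrib_right distrib_right)
  also have "\<dots> = (\<Sum>i\<in>{1..length u}. \<Sum>v\<in>insS u. bvec (ins u i False) v * g v w + bvec (ins u i True) v * g v w)"
    by (rule sum.swap)
  also have "\<dots> = (\<Sum>i\<in>{1..length u}. g (ins u i False) w + g (ins u i True) w)"
    by (rule sum.cong) (auto simp: sum.distrib finite_insS sum_bvec insS_def)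
  finally show ?thesis .
qed

lemma Vstar_eq: "Vstar_basis v w = (if v \<noteq> [] \<and> butlast v \<in> Comp then bvec (butlast v) w else (0::'a::field))"
proof -
  have "supp_v (bvec v :: _ \<Rightarrow> 'a) \<inter> supp_v (V_basis w :: _ \<Rightarrow> 'a) = (if v = w @ [False] \<or> v = w @ [True] then {v} else {})"
    by (auto simp: supp_v_def bvec_def V_basis_def)
  then have "scal (bvec v) (V_basis w :: _ \<Rightarrow> 'a) = (if v = w @ [False] \<or> v = w @ [True] then 1 else 0)"
    by (auto simp: scal_def bvec_def V_basis_def)
  moreover have "(v = w @ [False] \<or> v = w @ [True]) \<longleftrightarrow> (v \<noteq> [] \<and> w = butlast v)"
    by (metis (full_types) append_butlast_last_id butlast_snoc snoc_eq_iff_butlast)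
  ultimately show ?thesis
    by (auto simp: Vstar_basis_def bvec_def)
qed

lemma supp_Vstar: "supp_v (Vstar_basis v :: _ \<Rightarrow> 'a::field) \<subseteq> {butlast v}"
  by (auto simp: supp_v_def Vstar_eq bvec_def split: if_splits)

lemma comp:
  assumes "finite S" "supp_v x \<subseteq> S" "\<And>u. finite (supp_v (f u))"
  shows "lin_ext g (lin_ext f x) w = (\<Sum>u\<in>S. x u * lin_ext g (f u) w)"
proof -
  define T where "T = (\<Union>u\<in>S. supp_v (f u))"
  have fT: "finite T" using assms by (simp add: T_def)
  have sT: "supp_v (lin_ext f x) \<subseteq> T"
  proof
    fix v assume "v \<in> supp_v (lin_ext f x)"
    then have "(\<Sum>u\<in>supp_v x. x u * f u v) \<noteq> 0" by (simp add: supp_v_def lin_ext_def)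
    then obtain u where "u \<in> supp_v x" "x u * f u v \<noteq> 0" by (meson sum.neutral)
    then show "v \<in> T" using assms(2) by (auto simp: T_def supp_v_def)
  qed
  have "lin_ext g (lin_ext f x) w = (\<Sum>v\<in>T. lin_ext f x v * g v w)"
    by (rule lin_ext_S[OF fT sT])
  also have "\<dots> = (\<Sum>v\<in>T. \<Sum>u\<in>S. x u * f u v * g v w)"
    by (simp add: lin_ext_S[OF assms(1,2)] sum_distrib_right)
  also have "\<dots> = (\<Sum>u\<in>S. x u * (\<Sum>v\<in>T. f u v * g v w))"
    by (subst sum.swap) (simp add: sum_distrib_left mult.assoc)
  also have "\<dots> = (\<Sum>u\<in>S. x u * lin_ext g (f u) w)"
  proof (rule sum.cong[OF refl])
    fix u assume "u \<in> S"
    then have "supp_v (f u) \<subseteq> T" by (auto simp: T_def)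
    then show "x u * (\<Sum>v\<in>T. f u v * g v w) = x u * lin_ext g (f u) w"
      by (simp add: lin_ext_S[OF fT])
  qed
  finally show ?thesis .
qed


lemma butlast_ins_lt:
  assumes "i < length u"
  shows "butlast (ins u i b) = ins (butlast u) i b"
proof -
  have aux: "butlast (ins (p @ c # r) (length p) b) = ins (butlast (p @ c # r)) (length p) b" for p c r
    by (simp add: ins_def butlast_append)
  have "u = take i u @ u ! i # drop (Suc i) u" using assms by (rule id_take_nth_drop)
  moreover have "length (take i u) = i" using assms by simp
  ultimately show ?thesis using aux[of "take i u" "u ! i" "drop (Suc i) u"] by simp
qed

lemma ins_facts:
  assumes "u \<in> Comp" "i \<in> {1..length u}"
  shows "ins u i b \<noteq> []" "butlast (ins u i b) \<in> Comp"
    "butlast (ins u i b) = (if i = length u then u else ins (butlast u) i b)"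
proof -
  show "ins u i b \<noteq> []" by (simp add: ins_def)
  show "butlast (ins u i b) = (if i = length u then u else ins (butlast u) i b)"
  proof (cases "i = length u")
    case True then show ?thesis by (simp add: ins_def)
  next
    case False
    then have "i < length u" using assms by auto
    then show ?thesis using False by (simp add: butlast_ins_lt)
  qed
  obtain v where u: "u = False # v" using assms(1) by (cases u) (auto simp: Comp_def)
  obtain j where "i = Suc j" using assms(2) by (cases i) auto
  then show "butlast (ins u i b) \<in> Comp" using u by (simp add: Comp_def ins_def butlast_append)
qed

lemma basis_case:
  assumes u: "u \<in> Comp"
  shows "lin_ext Vstar_basis (U_basis u) w - lin_ext U_basis (Vstar_basis u) w = 2 * (bvec u w :: 'a::field)"
proof -
  define n where "n = length u"
  have n1: "n \<ge> 1" using u by (cases u) (auto simp: n_def Comp_def)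
  have bn: "butlast (ins u n b) = u" for b using ins_facts(3)[OF u, of n b] n1 by (simp add: n_def)
  have A: "lin_ext Vstar_basis (U_basis u) w = (\<Sum>i\<in>{1..n}. bvec (butlast (ins u i False)) w + bvec (butlast (ins u i True)) w :: 'a)"
    unfolding lin_ext_U n_def
  proof (rule sum.cong[OF refl])
    fix i assume i: "i \<in> {1..length u}"
    show "Vstar_basis (ins u i False) w + Vstar_basis (ins u i True) w =
      (bvec (butlast (ins u i False)) w + bvec (butlast (ins u i True)) w :: 'a)"
      unfolding Vstar_eq using ins_facts(1,2)[OF u i] by simp
  qed
  also have "\<dots> = 2 * bvec u w + (\<Sum>i\<in>{1..n-1}. bvec (ins (butlast u) i False) w + bvec (ins (butlast u) i True) w)"
  proof -
    have "{1..n} = insert n {1..n-1}" using n1 by auto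
    then have "(\<Sum>i\<in>{1..n}. bvec (butlast (ins u i False)) w + bvec (butlast (ins u i True)) w :: 'a)
      = (bvec (butlast (ins u n False)) w + bvec (butlast (ins u n True)) w) +
        (\<Sum>i\<in>{1..n-1}. bvec (butlast (ins u i False)) w + bvec (butlast (ins u i True)) w)"
      using n1 by (subst sum.insert[symmetric]) auto
    also have "(\<Sum>i\<in>{1..n-1}. bvec (butlast (ins u i False)) w + bvec (butlast (ins u i True)) w :: 'a)
       = (\<Sum>i\<in>{1..n-1}. bvec (ins (butlast u) i False) w + bvec (ins (butlast u) i True) w)"
    proof (rule sum.cong[OF refl])
      fix i assume i: "i \<in> {1..n-1}"
      then have "i \<in> {1..length u}" "i < length u" using n1 by (auto simp: n_def)
      then show "bvec (butlast (ins u i False)) w + bvec (butlast (ins u i True)) w =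
        (bvec (ins (butlast u) i False) w + bvec (ins (butlast u) i True) w :: 'a)"
        by (simp add: butlast_ins_lt)
    qed
    finally show ?thesis using bn by simp
  qed
  finally have A': "lin_ext Vstar_basis (U_basis u) w = 2 * bvec u w + (\<Sum>i\<in>{1..n-1}. bvec (ins (butlast u) i False) w + bvec (ins (butlast u) i True) w :: 'a)" .
  have B: "lin_ext U_basis (Vstar_basis u) w = (\<Sum>i\<in>{1..n-1}. bvec (ins (butlast u) i False) w + bvec (ins (butlast u) i True) w :: 'a)"
  proof (cases "butlast u \<in> Comp")
    case True
    have "(Vstar_basis u :: _ \<Rightarrow> 'a) = bvec (butlast u)" using True u by (auto simp: Vstar_eq Comp_def fun_eq_iff)
    then show ?thesis unfolding lin_ext_bvec by (simp add: lin_ext_bvec U_basis_def n_def)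
  next
    case False
    have "(Vstar_basis u :: _ \<Rightarrow> 'a) = (\<lambda>_. 0)" using False by (auto simp: Vstar_eq fun_eq_iff)
    moreover have n0: "n - 1 = 0"
    proof -
      obtain v where uv: "u = False # v" using u by (cases u) (auto simp: Comp_def)
      have "v = []"
      proof (rule ccontr)
        assume "v \<noteq> []"
        then have "butlast u \<in> Comp" using uv by (simp add: Comp_def)
        then show False using False by simp
      qed
      then show ?thesis using uv by (simp add: n_def)
    qed
    ultimately have "lin_ext U_basis (Vstar_basis u) w = (0::'a)" using lin_ext_zero[of U_basis w] by simp
    moreover have "{1..n-1} = ({}::nat set)" using n0 by simp
    ultimately show ?thesis by simp
  qed
  show ?thesis unfolding A' B by simp
qed

theorem proposition4p8:
  fixes x :: "bool list \<Rightarrow> 'a::field_char_0"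
  assumes "in_KComp x"
  shows "(\<lambda>w. Vstar_op (U_op x) w - U_op (Vstar_op x) w) = (\<lambda>w. 2 * x w)"
proof
  fix w
  have f: "finite (supp_v x)" and s: "supp_v x \<subseteq> Comp" using assms by (auto simp: in_KComp_def)
  have fU: "finite (supp_v (U_basis u :: _ \<Rightarrow> 'a))" for u by (rule finite_subset[OF supp_U finite_insS])
  have fV: "finite (supp_v (Vstar_basis u :: _ \<Rightarrow> 'a))" for u by (rule finite_subset[OF supp_Vstar]) simp
  have "Vstar_op (U_op x) w - U_op (Vstar_op x) w
     = (\<Sum>u\<in>supp_v x. x u * (lin_ext Vstar_basis (U_basis u) w - lin_ext U_basis (Vstar_basis u) w))"
  proof -
    have 1: "Vstar_op (U_op x) w = (\<Sum>u\<in>supp_v x. x u * lin_ext Vstar_basis (U_basis u) w)"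
      unfolding Vstar_op_def U_op_def by (rule comp[OF f order_refl fU])
    have 2: "U_op (Vstar_op x) w = (\<Sum>u\<in>supp_v x. x u * lin_ext U_basis (Vstar_basis u) w)"
      unfolding Vstar_op_def U_op_def by (rule comp[OF f order_refl fV])
    show ?thesis unfolding 1 2 sum_subtractf[symmetric] right_diff_distrib ..
  qed
  also have "\<dots> = (\<Sum>u\<in>supp_v x. x u * (2 * bvec u w))"
    by (rule sum.cong) (use s in \<open>auto simp: basis_case\<close>)
  also have "\<dots> = 2 * x w"
  proof (cases "w \<in> supp_v x")
    case True
    have "(\<Sum>u\<in>supp_v x. x u * (2 * bvec u w)) = (\<Sum>u\<in>supp_v x. if u = w then 2 * x w else 0)"
      by (rule sum.cong) (auto simp: bvec_def)
    then show ?thesis using True f by simp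
  next
    case False
    then have "x w = 0" by (simp add: supp_v_def)
    moreover have "(\<Sum>u\<in>supp_v x. x u * (2 * bvec u w)) = 0"
      by (rule sum.neutral) (use False in \<open>auto simp: bvec_def\<close>)
    ultimately show ?thesis by simp
  qed
  finally show "Vstar_op (U_op x) w - U_op (Vstar_op x) w = 2 * x w" .
qed

end
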